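(* The class of diamond-weakly modular graphs is closed under gated amalgamation: if $G$ is a gated amalgam of two diamond-weakly modular graphs $G_1$ and $G_2$, then $G$ is diamond-weakly modular.
   Context: All graphs are finite, simple and connected; $d$ is the shortest-path distance and $I(a,b)=\{w: d(a,w)+d(w,b)=d(a,b)\}$. For $S\subseteq V(G)$ and a vertex $y$, a vertex $x\in S$ is a gate of $y$ in $S$ if $x\in I(y,w)$ for all $w\in S$; $S$ (or the subgraph it induces) is gated if every vertex has a gate in $S$. A graph $G$ is a gated amalgam of $G_1$ and $G_2$ if $G_1,G_2$ are gated subgraphs of $G$ with $G_1\cup G_2=G$, $G_1\cap G_2\ne\emptyset$, and there are no edges between $G_1\setminus G_2$ and $G_2\setminus G_1$ (equivalently, $G$ is obtained from $G_1$ and $G_2$ by identifying isomorphic gated subgraphs $H_1\subseteq G_1$, $H_2\subseteq G_2$). Quadrangle condition $(QC)$: for any four vertices $u,v,w,y$ with $d(v,y)=d(w,y)=1$ and $2=d(v,w)\le d(u,v)=d(u,w)=d(u,y)-1$, there exists a common neighbor $z$ of $v$ and $w$ with $d(u,z)=d(u,v)-1$. Triangle diamond condition $(TDC)$: for any three vertices $u,v,w$ with $1=d(v,w)<d(u,v)=d(u,w)$, there exists a common neighbor $z$ of $v$ and $w$ with $d(u,z)=d(u,v)-1$ such that $z$ is adjacent to every vertex $x$ with $d(x,v)=1$, $d(u,x)=d(u,v)-1$ and to every vertex $y$ with $d(y,w)=1$, $d(u,y)=d(u,w)-1$ (diamonds being $K_4$ minus an edge). A graph is diamond-weakly modular if it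 satisfies $(QC)$ and $(TDC)$. *)

theory Defs
  imports Main
begin

definition is_walk :: "'a set \<Rightarrow> ('a \<Rightarrow> 'a \<Rightarrow> bool) \<Rightarrow> 'a list \<Rightarrow> bool" where
  "is_walk V E xs \<longleftrightarrow> xs \<noteq> [] \<and> set xs \<subseteq> V \<and>
     (\<forall>i. Suc i < length xs \<longrightarrow> E (xs ! i) (xs ! Suc i))"

definition connected_graph :: "'a set \<Rightarrow> ('a \<Rightarrow> 'a \<Rightarrow> bool) \<Rightarrow> bool" where
  "connected_graph V E \<longleftrightarrow>
     (\<forall>u\<in>V. \<forall>v\<in>V. \<exists>xs. is_walk V E xs \<and> hd xs = u \<and> last xs = v)"

definition fsc_graph :: "'a set \<Rightarrow> ('a \<Rightarrow> 'a \<Rightarrow> bool) \<Rightarrow> bool" where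
  "fsc_graph V E \<longleftrightarrow> finite V \<and> V \<noteq> {} \<and>
     (\<forall>x y. E x y \<longrightarrow> x \<in> V \<and> y \<in> V) \<and>
     (\<forall>x y. E x y \<longrightarrow> E y x) \<and> (\<forall>x. \<not> E x x) \<and>
     connected_graph V E"

definition gdist :: "'a set \<Rightarrow> ('a \<Rightarrow> 'a \<Rightarrow> bool) \<Rightarrow> 'a \<Rightarrow> 'a \<Rightarrow> nat" where
  "gdist V E u v = (LEAST n. \<exists>xs. is_walk V E xs \<and> hd xs = u \<and> last xs = v \<and> length xs = Suc n)"

definition induced :: "('a \<Rightarrow> 'a \<Rightarrow> bool) \<Rightarrow> 'a set \<Rightarrow> 'a \<Rightarrow> 'a \<Rightarrow> bool" where
  "induced E S x y \<longleftrightarrow> E x y \<and> x \<in> S \<and> y \<in> S"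

definition interval :: "'a set \<Rightarrow> ('a \<Rightarrow> 'a \<Rightarrow> bool) \<Rightarrow> 'a \<Rightarrow> 'a \<Rightarrow> 'a set" where
  "interval V E a b = {w \<in> V. gdist V E a w + gdist V E w b = gdist V E a b}"

definition is_gate :: "'a set \<Rightarrow> ('a \<Rightarrow> 'a \<Rightarrow> bool) \<Rightarrow> 'a set \<Rightarrow> 'a \<Rightarrow> 'a \<Rightarrow> bool" where
  "is_gate V E S y x \<longleftrightarrow> x \<in> S \<and> (\<forall>w\<in>S. x \<in> interval V E y w)"

definition gated :: "'a set \<Rightarrow> ('a \<Rightarrow> 'a \<Rightarrow> bool) \<Rightarrow> 'a set \<Rightarrow> bool" where
  "gated V E S \<longleftrightarrow> S \<subseteq> V \<and> (\<forall>y\<in>V. \<exists>x. is_gate V E S y x)"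

definition gated_amalgam :: "'a set \<Rightarrow> ('a \<Rightarrow> 'a \<Rightarrow> bool) \<Rightarrow> 'a set \<Rightarrow> 'a set \<Rightarrow> bool" where
  "gated_amalgam V E V1 V2 \<longleftrightarrow> gated V E V1 \<and> gated V E V2 \<and> V1 \<union> V2 = V \<and>
     V1 \<inter> V2 \<noteq> {} \<and> (\<forall>x\<in>V1 - V2. \<forall>y\<in>V2 - V1. \<not> E x y)"

definition QC :: "'a set \<Rightarrow> ('a \<Rightarrow> 'a \<Rightarrow> bool) \<Rightarrow> bool" where
  "QC V E \<longleftrightarrow> (\<forall>u\<in>V. \<forall>v\<in>V. \<forall>w\<in>V. \<forall>y\<in>V.
     gdist V E v y = 1 \<and> gdist V E w y = 1 \<and> gdist V E v w = 2 \<and>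
     2 \<le> gdist V E u v \<and> gdist V E u v = gdist V E u w \<and> gdist V E u y = gdist V E u v + 1
     \<longrightarrow> (\<exists>z\<in>V. E z v \<and> E z w \<and> gdist V E u z + 1 = gdist V E u v))"

definition TDC :: "'a set \<Rightarrow> ('a \<Rightarrow> 'a \<Rightarrow> bool) \<Rightarrow> bool" where
  "TDC V E \<longleftrightarrow> (\<forall>u\<in>V. \<forall>v\<in>V. \<forall>w\<in>V.
     gdist V E v w = 1 \<and> 1 < gdist V E u v \<and> gdist V E u v = gdist V E u w
     \<longrightarrow> (\<exists>z\<in>V. E z v \<and> E z w \<and> gdist V E u z + 1 = gdist V E u v \<and>
          (\<forall>x\<in>V. gdist V E x v = 1 \<and> gdist V E u x + 1 = gdist V E u v \<and> x \<noteq> z \<longrightarrow> E z x) \<and>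
          (\<forall>y\<in>V. gdist V E y w = 1 \<and> gdist V E u y + 1 = gdist V E u w \<and> y \<noteq> z \<longrightarrow> E z y)))"

definition diamond_weakly_modular :: "'a set \<Rightarrow> ('a \<Rightarrow> 'a \<Rightarrow> bool) \<Rightarrow> bool" where
  "diamond_weakly_modular V E \<longleftrightarrow> fsc_graph V E \<and> QC V E \<and> TDC V E"

end

theory Submission
  imports Defs
begin

fun reach :: "'a set \<Rightarrow> ('a \<Rightarrow> 'a \<Rightarrow> bool) \<Rightarrow> nat \<Rightarrow> 'a \<Rightarrow> 'a \<Rightarrow> bool" where
  "reach V E 0 u v = (u \<in> V \<and> u = v)"
| "reach V E (Suc n) u v = (u \<in> V \<and> (\<exists>w. E u w \<and> reach V E n w v))"

lemma is_walk_Cons: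
  "is_walk V E (x # ys) \<longleftrightarrow> x \<in> V \<and> (ys = [] \<or> (E x (hd ys) \<and> is_walk V E ys))"
proof
  assume h: "is_walk V E (x # ys)"
  show "x \<in> V \<and> (ys = [] \<or> (E x (hd ys) \<and> is_walk V E ys))"
  proof (cases ys)
    case Nil then show ?thesis using h by (simp add: is_walk_def)
  next
    case (Cons y zs)
    have "E ((x # ys) ! 0) ((x # ys) ! Suc 0)" using h Cons unfolding is_walk_def by auto
    then have "E x y" using Cons by simp
    moreover have "E (ys ! i) (ys ! Suc i)" if "Suc i < length ys" for i
    proof -
      have "E ((x # ys) ! Suc i) ((x # ys) ! Suc (Suc i))" using h that unfolding is_walk_def by auto
      then show ?thesis by simp
    qed
    ultimately show ?thesis using h Cons unfolding is_walk_def by simp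
  qed
next
  assume h: "x \<in> V \<and> (ys = [] \<or> (E x (hd ys) \<and> is_walk V E ys))"
  show "is_walk V E (x # ys)"
  proof (cases ys)
    case Nil then show ?thesis using h by (simp add: is_walk_def)
  next
    case (Cons y zs)
    have "E (((x # ys)) ! i) ((x # ys) ! Suc i)" if "Suc i < length (x # ys)" for i
    proof (cases i)
      case 0 then show ?thesis using h Cons by simp
    next
      case (Suc j) then show ?thesis using h that Cons unfolding is_walk_def by auto
    qed
    then show ?thesis using h Cons unfolding is_walk_def by auto
  qed
qed

lemma walk_reach:
  "(\<exists>xs. is_walk V E xs \<and> hd xs = u \<and> last xs = v \<and> length xs = Suc n) \<longleftrightarrow> reach V E n u v"
proof (induction n arbitrary: u)
  case 0
  show ?case
  proof
    assume "\<exists>xs. is_walk V E xs \<and> hd xs = u \<and> last xs = v \<and> length xs = Suc 0"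
    then obtain xs where "is_walk V E xs" "hd xs = u" "last xs = v" "length xs = Suc 0" by blast
    then show "reach V E 0 u v" by (cases xs) (auto simp: is_walk_def)
  next
    assume "reach V E 0 u v"
    then have "is_walk V E [u] \<and> hd [u] = u \<and> last [u] = v \<and> length [u] = Suc 0"
      by (auto simp add: is_walk_def)
    then show "\<exists>xs. is_walk V E xs \<and> hd xs = u \<and> last xs = v \<and> length xs = Suc 0" by blast
  qed
next
  case (Suc n)
  show ?case
  proof
    assume "\<exists>xs. is_walk V E xs \<and> hd xs = u \<and> last xs = v \<and> length xs = Suc (Suc n)"
    then obtain xs where h: "is_walk V E xs" "hd xs = u" "last xs = v" "length xs = Suc (Suc n)" by blast
    then obtain ys where xs: "xs = u # ys" by (cases xs) auto
    with h have ys: "ys \<noteq> []" "length ys = Suc n" "last ys = v" by auto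
    with h xs have "u \<in> V" "E u (hd ys)" "is_walk V E ys" by (auto simp: is_walk_Cons)
    with ys Suc.IH[of "hd ys"] show "reach V E (Suc n) u v" by auto
  next
    assume "reach V E (Suc n) u v"
    then obtain w where h: "u \<in> V" "E u w" "reach V E n w v" by auto
    with Suc.IH obtain ys where ys: "is_walk V E ys" "hd ys = w" "last ys = v" "length ys = Suc n" by blast
    then have "ys \<noteq> []" by auto
    then have "is_walk V E (u # ys) \<and> hd (u # ys) = u \<and> last (u # ys) = v \<and> length (u # ys) = Suc (Suc n)"
      using ys h by (auto simp: is_walk_Cons)
    then show "\<exists>xs. is_walk V E xs \<and> hd xs = u \<and> last xs = v \<and> length xs = Suc (Suc n)" by blast
  qed
qed

lemma gdist_reach: "gdist V E u v = (LEAST n. reach V E n u v)"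
  unfolding gdist_def walk_reach ..

lemma reach_in1: "reach V E n u v \<Longrightarrow> u \<in> V"
  by (cases n) auto

lemma reach_trans: "reach V E m u w \<Longrightarrow> reach V E n w v \<Longrightarrow> reach V E (m + n) u v"
  by (induction m arbitrary: u) auto

lemma reach_mono: "reach V' E' n u v \<Longrightarrow> V' \<subseteq> V \<Longrightarrow> (\<And>x y. E' x y \<Longrightarrow> E x y) \<Longrightarrow> reach V E n u v"
  by (induction n arbitrary: u) (auto, blast)

lemma reach_snoc_inv: "reach V E (Suc n) u v \<Longrightarrow> \<exists>w. reach V E n u w \<and> E w v"
proof (induction n arbitrary: u)
  case 0 then show ?case by auto
next
  case (Suc n)
  then obtain w where "u \<in> V" "E u w" "reach V E (Suc n) w v" by auto
  with Suc.IH[of w] obtain x where "reach V E n w x" "E x v" by auto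
  with \<open>u \<in> V\<close> \<open>E u w\<close> show ?case by auto
qed

locale fgraph =
  fixes V :: "'a set" and E :: "'a \<Rightarrow> 'a \<Rightarrow> bool"
  assumes G: "fsc_graph V E"
begin

abbreviation d where "d \<equiv> gdist V E"

lemma Ein: "E x y \<Longrightarrow> x \<in> V \<and> y \<in> V" using G by (auto simp: fsc_graph_def)
lemma Esym: "E x y \<Longrightarrow> E y x" using G by (auto simp: fsc_graph_def)
lemma Eirr: "\<not> E x x" using G by (auto simp: fsc_graph_def)

lemma reach_in2: "reach V E n u v \<Longrightarrow> v \<in> V"
  by (induction n arbitrary: u) (auto dest: Ein)

lemma reach_ex: "u \<in> V \<Longrightarrow> v \<in> V \<Longrightarrow> \<exists>n. reach V E n u v"
proof -
  assume "u \<in> V" "v \<in> V"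
  then obtain xs where xs: "is_walk V E xs" "hd xs = u" "last xs = v"
    using G unfolding fsc_graph_def connected_graph_def by blast
  then have "xs \<noteq> []" by (simp add: is_walk_def)
  then have "length xs = Suc (length xs - 1)" by simp
  then have "reach V E (length xs - 1) u v"
    unfolding walk_reach[symmetric] using xs by (intro exI[of _ xs]) simp
  then show ?thesis by (rule exI)
qed

lemma reach_d: "u \<in> V \<Longrightarrow> v \<in> V \<Longrightarrow> reach V E (d u v) u v"
  unfolding gdist_reach using reach_ex by (rule LeastI_ex)

lemma d_le: "reach V E n u v \<Longrightarrow> d u v \<le> n"
  unfolding gdist_reach by (rule Least_le)

lemma reach_sym: "reach V E n u v \<Longrightarrow> reach V E n v u"
proof (induction n arbitrary: u)
  case 0 then show ?case by auto
next
  case (Suc n)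
  then obtain w where "u \<in> V" "E u w" "reach V E n w v" by auto
  then have "reach V E n v w" "reach V E 1 w u" using Suc.IH Esym Ein by auto
  from reach_trans[OF this] show ?case by simp
qed

lemma d_sym: "d u v = d v u"
proof (cases "u \<in> V \<and> v \<in> V")
  case True
  then have "reach V E (d u v) v u" "reach V E (d v u) u v" using reach_d reach_sym by blast+
  then have "d v u \<le> d u v" "d u v \<le> d v u" using d_le by blast+
  then show ?thesis by (rule antisym[rotated])
next
  case False
  have "\<not> reach V E n u v" for n
    using False reach_in1[of V E n u v] reach_in2[of n u v] by blast
  moreover have "\<not> reach V E n v u" for n
    using False reach_in1[of V E n v u] reach_in2[of n v u] by blast
  ultimately have "(\<lambda>n. reach V E n u v) = (\<lambda>n. reach V E n v u)" by (intro ext) simp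
  then show ?thesis unfolding gdist_reach by simp
qed

lemma d_tri: "u \<in> V \<Longrightarrow> w \<in> V \<Longrightarrow> v \<in> V \<Longrightarrow> d u v \<le> d u w + d w v"
  using reach_trans[OF reach_d reach_d] d_le by blast

lemma d_self: "u \<in> V \<Longrightarrow> d u u = 0"
proof -
  assume "u \<in> V"
  then have "reach V E 0 u u" by simp
  from d_le[OF this] show ?thesis by simp
qed

lemma d0: "u \<in> V \<Longrightarrow> v \<in> V \<Longrightarrow> d u v = 0 \<longleftrightarrow> u = v"
proof
  assume "u \<in> V" "v \<in> V" "d u v = 0"
  then have "reach V E 0 u v" using reach_d[of u v] by simp
  then show "u = v" by simp
next
  assume "u \<in> V" "u = v"
  then show "d u v = 0" using d_self by simp
qed

lemma d1: "u \<in> V \<Longrightarrow> v \<in> V \<Longrightarrow> d u v = 1 \<longleftrightarrow> E u v"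
proof
  assume "u \<in> V" "v \<in> V" "d u v = 1"
  then have "reach V E 1 u v" using reach_d by metis
  then show "E u v" by auto
next
  assume h: "u \<in> V" "v \<in> V" "E u v"
  then have "reach V E 1 u v" by auto
  then have "d u v \<le> 1" by (rule d_le)
  moreover have "u \<noteq> v" using h Eirr by auto
  ultimately show "d u v = 1" using d0 h by fastforce
qed

lemma d_edge: "E x y \<Longrightarrow> u \<in> V \<Longrightarrow> d u y \<le> d u x + 1"
  using d_tri[of u x y] d1[of x y] Ein by fastforce

lemma pred_ex: "u \<in> V \<Longrightarrow> v \<in> V \<Longrightarrow> u \<noteq> v \<Longrightarrow> \<exists>q. E q v \<and> d u q + 1 = d u v"
proof -
  assume h: "u \<in> V" "v \<in> V" "u \<noteq> v"
  then obtain n where n: "d u v = Suc n" using d0 by (cases "d u v") auto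
  then obtain w where w: "reach V E n u w" "E w v" using reach_d[OF h(1,2)] reach_snoc_inv by metis
  then have "d u w \<le> n" using d_le by blast
  moreover have "d u v \<le> d u w + 1" using d_edge[OF w(2) h(1)] .
  ultimately show ?thesis using w n by auto
qed

end


context fgraph
begin

lemma gate_ex: "gated V E S \<Longrightarrow> y \<in> V \<Longrightarrow> \<exists>g\<in>S. \<forall>s\<in>S. d y s = d y g + d g s"
  unfolding gated_def is_gate_def interval_def by force

lemma gate_self: "S \<subseteq> V \<Longrightarrow> y \<in> S \<Longrightarrow> g \<in> S \<Longrightarrow> \<forall>s\<in>S. d y s = d y g + d g s \<Longrightarrow> g = y"
proof -
  assume h: "S \<subseteq> V" "y \<in> S" "g \<in> S" "\<forall>s\<in>S. d y s = d y g + d g s"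
  then have yV: "y \<in> V" and gV: "g \<in> V" by auto
  have "d y y = d y g + d g y" using h by blast
  then have "d y g = 0" using d_self[OF yV] by simp
  then show "g = y" using d0[OF yV gV] by simp
qed

lemma convex: assumes "gated V E S" "a \<in> S" "b \<in> S" "p \<in> V" "d a p + d p b = d a b"
  shows "p \<in> S"
proof -
  have SV: "S \<subseteq> V" using assms(1) by (simp add: gated_def)
  from gate_ex[OF assms(1) assms(4)] obtain g where g: "g \<in> S" "\<forall>s\<in>S. d p s = d p g + d g s" by (elim bexE)
  have aV: "a \<in> V" and bV: "b \<in> V" and gV: "g \<in> V" using SV g(1) assms(2,3) by auto
  have "d a b \<le> d a g + d g b" using d_tri[OF aV gV bV] .
  moreover have "d p a = d p g + d g a" "d p b = d p g + d g b" using g(2) assms(2,3) by blast+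
  ultimately have "d p g = 0" using assms(5) d_sym[of a p] d_sym[of g a] by linarith
  then have "p = g" using d0[OF assms(4) gV] by simp
  then show ?thesis using g(1) by simp
qed

lemma gate_nbr: assumes "gated V E S" "v \<in> S" "x \<in> V" "x \<notin> S" "E x v"
  shows "\<forall>s\<in>S. d x s = 1 + d v s"
proof -
  have SV: "S \<subseteq> V" using assms(1) by (simp add: gated_def)
  from gate_ex[OF assms(1) assms(3)] obtain g where g: "g \<in> S" "\<forall>s\<in>S. d x s = d x g + d g s" by (elim bexE)
  have vV: "v \<in> V" and gV: "g \<in> V" using SV g(1) assms(2) by auto
  have "d x v = 1" using d1[OF assms(3) vV] assms(5) by simp
  moreover have "x \<noteq> g" using g(1) assms(4) by auto
  then have "d x g \<noteq> 0" using d0[OF assms(3) gV] by simp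
  moreover have "d x v = d x g + d g v" using g(2) assms(2) by blast
  ultimately have "d g v = 0" "d x g = 1" by auto
  then have "g = v" using d0[OF gV vV] by simp
  have "d x s = 1 + d v s" if "s \<in> S" for s
  proof -
    have "d x s = d x g + d g s" using g(2) that by blast
    then show ?thesis using \<open>g = v\<close> \<open>d x g = 1\<close> by simp
  qed
  then show ?thesis by blast
qed

end

locale amalg = fgraph +
  fixes A B
  assumes gA: "gated V E A" and gB: "gated V E B" and U: "A \<union> B = V"
  and NE: "\<forall>x\<in>A-B. \<forall>y\<in>B-A. \<not> E x y"
  and DA: "diamond_weakly_modular A (induced E A)"
begin

lemma AV: "A \<subseteq> V" using U by blast
lemma BV: "B \<subseteq> V" using U by blast

lemma NE2: "x \<in> A - B \<Longrightarrow> y \<in> B - A \<Longrightarrow> \<not> E y x"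
  using NE Esym by blast

lemma gate_in_B: assumes "y \<in> V" "y \<notin> A" "g \<in> A" "\<forall>s\<in>A. d y s = d y g + d g s"
  shows "g \<in> B"
proof (rule ccontr)
  assume gB': "g \<notin> B"
  have "y \<noteq> g" using assms(2,3) by auto
  moreover have "g \<in> V" using assms(3) AV by blast
  ultimately obtain q where q: "E q g" "d y q + 1 = d y g" using pred_ex[of y g] assms(1) by blast
  have qV: "q \<in> V" using q Ein by blast
  show False
  proof (cases "q \<in> A")
    case True
    then have "d y q = d y g + d g q" using assms(4) by blast
    then show ?thesis using q(2) by simp
  next
    case False
    then have "q \<in> B - A" using qV U by blast
    moreover have "g \<in> A - B" using gB' assms(3) by blast
    ultimately show ?thesis using NE2 q(1) by blast
  qed
qed

lemma reach_A: "a \<in> A \<Longrightarrow> b \<in> A \<Longrightarrow> reach V E n a b \<Longrightarrow> n = d a b \<Longrightarrow> reach A (induced E A) n a b"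
proof (induction n arbitrary: a)
  case 0 then show ?case by simp
next
  case (Suc n)
  from Suc.prems(3) obtain w where w: "a \<in> V" "E a w" "reach V E n w b" by auto
  have wV: "w \<in> V" using w Ein by blast
  have bV: "b \<in> V" using Suc.prems(2) AV by blast
  have "d w b \<le> n" using d_le[OF w(3)] .
  moreover have "d a b \<le> d a w + d w b" using d_tri[OF w(1) wV bV] .
  moreover have "d a w = 1" using d1[OF w(1) wV] w(2) by simp
  ultimately have "d w b = n" "d a w + d w b = d a b" using Suc.prems(4) by auto
  then have "w \<in> A" using convex[OF gA Suc.prems(1,2) wV] by simp
  then have "reach A (induced E A) n w b" using Suc.IH[OF _ Suc.prems(2) w(3)] \<open>d w b = n\<close> by simp
  moreover have "induced E A a w" using Suc.prems(1) w(2) \<open>w \<in> A\<close> by (simp add: induced_def)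
  ultimately show ?case using Suc.prems(1) by auto
qed

lemma dA: "a \<in> A \<Longrightarrow> b \<in> A \<Longrightarrow> gdist A (induced E A) a b = d a b"
  unfolding gdist_reach[of A]
proof (rule Least_equality)
  assume h: "a \<in> A" "b \<in> A"
  then have "a \<in> V" "b \<in> V" using AV by auto
  then have "reach V E (d a b) a b" by (rule reach_d)
  then show "reach A (induced E A) (d a b) a b" using reach_A h by blast
next
  fix m assume "reach A (induced E A) m a b"
  then have "reach V E m a b" by (rule reach_mono) (use AV in \<open>auto simp: induced_def\<close>)
  then show "d a b \<le> m" by (rule d_le)
qed

lemma QC_A: assumes "u \<in> A" "v \<in> A" "w \<in> A" "y \<in> A" "d v y = 1" "d w y = 1" "d v w = 2"
  "2 \<le> d u v" "d u v = d u w" "d u y = d u v + 1"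
  shows "\<exists>z\<in>A. E z v \<and> E z w \<and> d u z + 1 = d u v"
proof -
  have "QC A (induced E A)" using DA by (simp add: diamond_weakly_modular_def)
  moreover note dAs = dA[OF assms(2) assms(4)] dA[OF assms(3) assms(4)] dA[OF assms(2) assms(3)]
    dA[OF assms(1) assms(2)] dA[OF assms(1) assms(3)] dA[OF assms(1) assms(4)]
  ultimately obtain z where z: "z \<in> A" "induced E A z v" "induced E A z w"
    "gdist A (induced E A) u z + 1 = gdist A (induced E A) u v"
    unfolding QC_def using assms by (metis (no_types, lifting))
  then show ?thesis using dA[OF assms(1) z(1)] dAs by (auto simp: induced_def)
qed

lemma TDC_A: assumes "u \<in> A" "v \<in> A" "w \<in> A" "d v w = 1" "1 < d u v" "d u v = d u w"
  shows "\<exists>z\<in>A. E z v \<and> E z w \<and> d u z + 1 = d u v \<and>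
          (\<forall>x\<in>A. d x v = 1 \<and> d u x + 1 = d u v \<and> x \<noteq> z \<longrightarrow> E z x) \<and>
          (\<forall>y\<in>A. d y w = 1 \<and> d u y + 1 = d u w \<and> y \<noteq> z \<longrightarrow> E z y)"
proof -
  have T: "TDC A (induced E A)" using DA by (simp add: diamond_weakly_modular_def)
  note dAs = dA[OF assms(2) assms(3)] dA[OF assms(1) assms(2)] dA[OF assms(1) assms(3)]
  have hyp: "gdist A (induced E A) v w = 1 \<and> 1 < gdist A (induced E A) u v \<and> gdist A (induced E A) u v = gdist A (induced E A) u w"
    using dAs assms(4-6) by simp
  from T[unfolded TDC_def, rule_format, OF assms(1) assms(2) assms(3) hyp] obtain z where z: "z \<in> A" "induced E A z v" "induced E A z w"
    "gdist A (induced E A) u z + 1 = gdist A (induced E A) u v"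
    "(\<forall>x\<in>A. gdist A (induced E A) x v = 1 \<and> gdist A (induced E A) u x + 1 = gdist A (induced E A) u v \<and> x \<noteq> z \<longrightarrow> induced E A z x)"
    "(\<forall>y\<in>A. gdist A (induced E A) y w = 1 \<and> gdist A (induced E A) u y + 1 = gdist A (induced E A) u w \<and> y \<noteq> z \<longrightarrow> induced E A z y)"
    by (elim bexE conjE) blast
  have e1: "E z v" "E z w" using z(2,3) by (auto simp: induced_def)
  have e2: "d u z + 1 = d u v" using z(4) dA[OF assms(1) z(1)] dAs by simp
  have e3: "E z x" if "x \<in> A" "d x v = 1" "d u x + 1 = d u v" "x \<noteq> z" for x
    using z(5) that dA[OF that(1) assms(2)] dA[OF assms(1) that(1)] dAs by (auto simp: induced_def)
  have e4: "E z y" if "y \<in> A" "d y w = 1" "d u y + 1 = d u w" "y \<noteq> z" for y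
    using z(6) that dA[OF that(1) assms(3)] dA[OF assms(1) that(1)] dAs by (auto simp: induced_def)
  show ?thesis using z(1) e1 e2 e3 e4 by blast
qed

lemma claimC: assumes "v \<in> A" "w \<in> A" "E v w" "u \<in> V" "u \<in> A \<or> v \<notin> B \<or> w \<notin> B"
  "d u v = d u w" "x \<in> V" "E x v" "d u x + 1 = d u v"
  shows "x \<in> A"
proof (rule ccontr)
  assume xA: "x \<notin> A"
  then have xB: "x \<in> B" using U assms(7) by blast
  have vB: "v \<in> B" using NE xA xB assms(1,8) Esym by blast
  have nb: "\<forall>s\<in>A. d x s = 1 + d v s" using gate_nbr[OF gA assms(1,7) xA assms(8)] .
  show False
  proof (cases "u \<in> A")
    case True
    then have "d x u = 1 + d v u" using nb by blast
    then show ?thesis using assms(9) d_sym[of x u] d_sym[of v u] by simp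
  next
    case False
    from gate_ex[OF gA assms(4)] obtain g where g: "g \<in> A" "\<forall>s\<in>A. d u s = d u g + d g s" by (elim bexE)
    have gB': "g \<in> B" using gate_in_B[OF assms(4) False g(1) g(2)] .
    have wB: "w \<notin> B" using False assms(5) vB by blast
    have wV: "w \<in> V" using assms(2) AV by blast
    have "\<forall>s\<in>B. d w s = 1 + d v s" using gate_nbr[OF gB vB wV wB] Esym assms(3) by blast
    then have "d w g = 1 + d v g" using gB' by blast
    moreover have "d u v = d u g + d g v" "d u w = d u g + d g w" using g(2) assms(1,2) by blast+
    ultimately show ?thesis using assms(6) d_sym[of w g] d_sym[of v g] by simp
  qed
qed

lemma TDC_main: assumes "u \<in> V" "v \<in> A" "w \<in> A" "E v w" "1 < d u v" "d u v = d u w"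
  "u \<in> A \<or> v \<notin> B \<or> w \<notin> B"
  shows "\<exists>z\<in>V. E z v \<and> E z w \<and> d u z + 1 = d u v \<and>
          (\<forall>x\<in>V. d x v = 1 \<and> d u x + 1 = d u v \<and> x \<noteq> z \<longrightarrow> E z x) \<and>
          (\<forall>y\<in>V. d y w = 1 \<and> d u y + 1 = d u w \<and> y \<noteq> z \<longrightarrow> E z y)"
proof -
  have vV: "v \<in> V" and wV: "w \<in> V" using assms(2,3) AV by auto
  have Cv: "x \<in> A" if "x \<in> V" "d x v = 1" "d u x + 1 = d u v" for x
  proof -
    have "E x v" using d1[OF that(1) vV] that(2) by simp
    then show ?thesis using claimC[OF assms(2,3,4,1,7,6) that(1) _ that(3)] by blast
  qed
  have Cw: "x \<in> A" if "x \<in> V" "d x w = 1" "d u x + 1 = d u w" for x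
  proof -
    have "E x w" using d1[OF that(1) wV] that(2) by simp
    moreover have "E w v" using assms(4) Esym by blast
    moreover have "u \<in> A \<or> w \<notin> B \<or> v \<notin> B" using assms(7) by blast
    ultimately show ?thesis using claimC[OF assms(3,2) _ assms(1) _ assms(6)[symmetric] that(1) _ that(3)] by blast
  qed
  from gate_ex[OF gA assms(1)] obtain g where g: "g \<in> A" "\<forall>s\<in>A. d u s = d u g + d g s" by (elim bexE)
  have gV: "g \<in> V" using g(1) AV by blast
  have gv: "d u v = d u g + d g v" and gw: "d u w = d u g + d g w" using g(2) assms(2,3) by blast+
  have m: "d g v = d g w" using gv gw assms(6) by simp
  have "v \<noteq> w" using assms(4) Eirr by blast
  then have m0: "d g v \<noteq> 0" using d0[OF gV vV] d0[OF gV wV] m by metis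
  show ?thesis
  proof (cases "d g v = 1")
    case True
    have ex: "E g v" "E g w" using True m d1[OF gV vV] d1[OF gV wV] by auto
    have du: "d u g + 1 = d u v" using True gv by simp
    have X: "x = g" if "x \<in> V" "d x v = 1" "d u x + 1 = d u v" for x
    proof -
      have xA: "x \<in> A" using Cv that by blast
      have "d u x = d u g + d g x" using g(2) xA by blast
      then have "d g x = 0" using that(3) du by simp
      then show ?thesis using d0[OF gV that(1)] by simp
    qed
    have Y: "y = g" if "y \<in> V" "d y w = 1" "d u y + 1 = d u w" for y
    proof -
      have yA: "y \<in> A" using Cw that by blast
      have "d u y = d u g + d g y" using g(2) yA by blast
      then have "d g y = 0" using that(3) du assms(6) by simp
      then show ?thesis using d0[OF gV that(1)] by simp
    qed
    show ?thesis
    proof (rule bexI[OF _ gV], intro conjI)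
      show "E g v" "E g w" "d u g + 1 = d u v" using ex du by simp_all
      show "\<forall>x\<in>V. d x v = 1 \<and> d u x + 1 = d u v \<and> x \<noteq> g \<longrightarrow> E g x" using X by blast
      show "\<forall>y\<in>V. d y w = 1 \<and> d u y + 1 = d u w \<and> y \<noteq> g \<longrightarrow> E g y" using Y by blast
    qed
  next
    case False
    then have "1 < d g v" using m0 by linarith
    moreover have "d v w = 1" using d1[OF vV wV] assms(4) by simp
    ultimately obtain z where z: "z \<in> A" "E z v" "E z w" "d g z + 1 = d g v"
      "\<forall>x\<in>A. d x v = 1 \<and> d g x + 1 = d g v \<and> x \<noteq> z \<longrightarrow> E z x"
      "\<forall>y\<in>A. d y w = 1 \<and> d g y + 1 = d g w \<and> y \<noteq> z \<longrightarrow> E z y"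
      using TDC_A[OF g(1) assms(2,3) _ _ m] by blast
    have zV: "z \<in> V" using z(1) AV by blast
    have "d u z = d u g + d g z" using g(2) z(1) by blast
    then have dz: "d u z + 1 = d u v" using z(4) gv by simp
    have X: "E z x" if "x \<in> V" "d x v = 1" "d u x + 1 = d u v" "x \<noteq> z" for x
    proof -
      have xA: "x \<in> A" using Cv that(1-3) by blast
      have "d u x = d u g + d g x" using g(2) xA by blast
      then have "d g x + 1 = d g v" using that(3) gv by simp
      then show ?thesis using z(5) xA that(2,4) by blast
    qed
    have Y: "E z y" if "y \<in> V" "d y w = 1" "d u y + 1 = d u w" "y \<noteq> z" for y
    proof -
      have yA: "y \<in> A" using Cw that(1-3) by blast
      have "d u y = d u g + d g y" using g(2) yA by blast
      then have "d g y + 1 = d g w" using that(3) gw by simp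
      then show ?thesis using z(6) yA that(2,4) by blast
    qed
    show ?thesis
    proof (rule bexI[OF _ zV], intro conjI)
      show "E z v" "E z w" "d u z + 1 = d u v" using z(2,3) dz by simp_all
      show "\<forall>x\<in>V. d x v = 1 \<and> d u x + 1 = d u v \<and> x \<noteq> z \<longrightarrow> E z x" using X by blast
      show "\<forall>y\<in>V. d y w = 1 \<and> d u y + 1 = d u w \<and> y \<noteq> z \<longrightarrow> E z y" using Y by blast
    qed
  qed
qed

lemma QC_main: assumes "u \<in> V" "v \<in> A" "w \<in> A" "y \<in> A" "d v y = 1" "d w y = 1" "d v w = 2"
  "2 \<le> d u v" "d u v = d u w" "d u y = d u v + 1"
  shows "\<exists>z\<in>V. E z v \<and> E z w \<and> d u z + 1 = d u v"
proof -
  have vV: "v \<in> V" and wV: "w \<in> V" using assms(2,3) AV by auto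
  from gate_ex[OF gA assms(1)] obtain g where g: "g \<in> A" "\<forall>s\<in>A. d u s = d u g + d g s" by (elim bexE)
  have gV: "g \<in> V" using g(1) AV by blast
  have gv: "d u v = d u g + d g v" and gw: "d u w = d u g + d g w" and gy: "d u y = d u g + d g y"
    using g(2) assms(2,3,4) by blast+
  have m: "d g v = d g w" "d g y = d g v + 1" using gv gw gy assms(9,10) by simp_all
  have "v \<noteq> w" using assms(7) d_self[OF vV] by auto
  then have m0: "d g v \<noteq> 0" using d0[OF gV vV] d0[OF gV wV] m by metis
  show ?thesis
  proof (cases "d g v = 1")
    case True
    have ex: "E g v" "E g w" using True m d1[OF gV vV] d1[OF gV wV] by auto
    have du: "d u g + 1 = d u v" using True gv by simp
    show ?thesis using gV ex du by blast
  next
    case False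
    then have "2 \<le> d g v" using m0 by linarith
    then obtain z where z: "z \<in> A" "E z v" "E z w" "d g z + 1 = d g v"
      using QC_A[OF g(1) assms(2,3,4,5,6,7) _ m(1) m(2)] by blast
    have "d u z = d u g + d g z" using g(2) z(1) by blast
    then have dz: "d u z + 1 = d u v" using z(4) gv by simp
    show ?thesis using z(1,2,3) dz AV by blast
  qed
qed

lemma crossing: assumes "u \<in> V" "y \<in> A" "y \<in> B" "v \<in> B - A" "w \<in> A - B" "E v y" "E w y"
  "d u v = d u w" "d u y = d u v + 1"
  shows False
proof (cases "u \<in> A")
  case True
  have vV: "v \<in> V" using assms(4) BV by blast
  have "\<forall>s\<in>A. d v s = 1 + d y s" using gate_nbr[OF gA assms(2) vV _ assms(6)] assms(4) by blast
  then have "d v u = 1 + d y u" using True by blast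
  then show ?thesis using assms(9) d_sym[of v u] d_sym[of y u] by simp
next
  case False
  then have uB: "u \<in> B" using U assms(1) by blast
  have wV: "w \<in> V" using assms(5) AV by blast
  have "\<forall>s\<in>B. d w s = 1 + d y s" using gate_nbr[OF gB assms(3) wV _ assms(7)] assms(5) by blast
  then have "d w u = 1 + d y u" using uB by blast
  then show ?thesis using assms(8,9) d_sym[of w u] d_sym[of y u] by simp
qed

end

theorem theorem2:
  fixes V V1 V2 :: "'a set" and E :: "'a \<Rightarrow> 'a \<Rightarrow> bool"
  assumes "fsc_graph V E"
    and "gated_amalgam V E V1 V2"
    and "diamond_weakly_modular V1 (induced E V1)"
    and "diamond_weakly_modular V2 (induced E V2)"
  shows "diamond_weakly_modular V E"
proof -
  interpret fgraph V E using assms(1) by unfold_locales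
  have am: "gated V E V1" "gated V E V2" "V1 \<union> V2 = V" "\<forall>x\<in>V1 - V2. \<forall>y\<in>V2 - V1. \<not> E x y"
    using assms(2) unfolding gated_amalgam_def by auto
  have am2: "\<forall>x\<in>V2 - V1. \<forall>y\<in>V1 - V2. \<not> E x y" using am(4) Esym by blast
  interpret a12: amalg V E V1 V2
    by unfold_locales (use am assms(3) in auto)
  interpret a21: amalg V E V2 V1
    by unfold_locales (use am am2 assms(4) in auto)
  have qc: "QC V E"
    unfolding QC_def
  proof (intro ballI impI)
    fix u v w y assume uV: "u \<in> V" and vV: "v \<in> V" and wV: "w \<in> V" and yV: "y \<in> V"
      and h: "d v y = 1 \<and> d w y = 1 \<and> d v w = 2 \<and> 2 \<le> d u v \<and> d u v = d u w \<and> d u y = d u v + 1"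
    have Evy: "E v y" using h d1[OF vV yV] by simp
    have Ewy: "E w y" using h d1[OF wV yV] by simp
    show "\<exists>z\<in>V. E z v \<and> E z w \<and> d u z + 1 = d u v"
    proof (cases "v \<in> V1 \<and> w \<in> V1 \<and> y \<in> V1")
      case True
      then show ?thesis using a12.QC_main[OF uV] h by blast
    next
      case F1: False
      show ?thesis
      proof (cases "v \<in> V2 \<and> w \<in> V2 \<and> y \<in> V2")
        case True
        then show ?thesis using a21.QC_main[OF uV] h by blast
      next
        case F2: False
        have yH: "y \<in> V1 \<and> y \<in> V2"
        proof (rule ccontr)
          assume "\<not> (y \<in> V1 \<and> y \<in> V2)"
          then show False using F1 F2 am(3,4) am2 Evy Ewy vV wV yV by blast
        qed
        have hh: "d u v = d u w" "d u y = d u v + 1" using h by simp_all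
        have c1: "\<not> (v \<in> V2 - V1 \<and> w \<in> V1 - V2)"
          using a12.crossing[OF uV _ _ _ _ Evy Ewy hh] yH by blast
        have c2: "\<not> (v \<in> V1 - V2 \<and> w \<in> V2 - V1)"
          using a21.crossing[OF uV _ _ _ _ Evy Ewy hh] yH by blast
        show ?thesis using F1 F2 am(3) vV wV yH c1 c2 by blast
      qed
    qed
  qed
  have tdc: "TDC V E"
    unfolding TDC_def
  proof (intro ballI impI)
    fix u v w assume uV: "u \<in> V" and vV: "v \<in> V" and wV: "w \<in> V"
      and h: "d v w = 1 \<and> 1 < d u v \<and> d u v = d u w"
    have Evw: "E v w" using h d1[OF vV wV] by simp
    have hh: "1 < d u v" "d u v = d u w" using h by simp_all
    have side: "(v \<in> V1 \<and> w \<in> V1) \<or> (v \<in> V2 \<and> w \<in> V2)"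
      using am(3,4) am2 Evw vV wV by blast
    show "\<exists>z\<in>V. E z v \<and> E z w \<and> d u z + 1 = d u v \<and>
          (\<forall>x\<in>V. d x v = 1 \<and> d u x + 1 = d u v \<and> x \<noteq> z \<longrightarrow> E z x) \<and>
          (\<forall>y\<in>V. d y w = 1 \<and> d u y + 1 = d u w \<and> y \<noteq> z \<longrightarrow> E z y)"
    proof (cases "v \<in> V1 \<and> w \<in> V1 \<and> (u \<in> V1 \<or> v \<notin> V2 \<or> w \<notin> V2)")
      case True
      then show ?thesis using a12.TDC_main[OF uV _ _ Evw hh] by blast
    next
      case False
      then have "v \<in> V2 \<and> w \<in> V2 \<and> (u \<in> V2 \<or> v \<notin> V1 \<or> w \<notin> V1)"
        using side am(3) uV by blast
      then show ?thesis using a21.TDC_main[OF uV _ _ Evw hh] by blast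
    qed
  qed
  show ?thesis unfolding diamond_weakly_modular_def using assms(1) qc tdc by blast
qed

end
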